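(* Let $\mathcal{P},\mathcal{S}$ be patterns, let $P\in\mathbb{R}^{n\times n}(\mathcal{P})$ be a reversible stochastic matrix with stationary distribution $\boldsymbol{\pi}$, $\hat{\boldsymbol{\pi}}=\boldsymbol{\pi}^{1/2}$ entrywise, and let \[ \mathcal{M}_{P,\boldsymbol{\pi}}=\Big\{X\in\mathbb{R}^{n\times n}_{\mathrm{exact}}(\mathcal{P}\cup\mathcal{S}) : X=X^\top,\ X\hat{\boldsymbol{\pi}}=\hat{\boldsymbol{\pi}},\ X_{ij}>0\text{ if }\{i,j\}\in\mathcal{S},\ X_{ij}=\tfrac{\hat\pi_i}{\hat\pi_j}P_{ij}\text{ if }\{i,j\}\notin\mathcal{S}\Big\}. \] Then for every $X\in\mathcal{M}_{P,\boldsymbol{\pi}}$, the tangent space of $\mathcal{M}_{P,\boldsymbol{\pi}}$ at $X$ (the set of velocities $\dot\gamma(0)$ of smooth curves $\gamma$ in $\mathcal{M}_{P,\boldsymbol{\pi}}$ with $\gamma(0)=X$) is \[ \mathcal{T}_X\mathcal{M}_{P,\boldsymbol{\pi}}=\{\xi\in\mathbb{R}^{n\times n}(\mathcal{S}) : \xi=\xi^\top,\ \xi\hat{\boldsymbol{\pi}}=0\}. \]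
   Context: A stochastic matrix is nonnegative with row sums $1$; it is reversible if irreducible and its (unique, positive) stationary distribution $\boldsymbol{\pi}$ (probability vector with $\boldsymbol{\pi}^\top P=\boldsymbol{\pi}^\top$) satisfies $\pi_iP_{ij}=\pi_jP_{ji}$ for all $i,j$. A pattern is a set of unordered pairs $\{i,j\}$, $1\le i,j\le n$, containing $\{i,i\}$ for all $i$. $\mathbb{R}^{n\times n}(\mathcal{S})$ is the set of real $n\times n$ matrices $\Delta$ with $\Delta_{ij}=\Delta_{ji}=0$ whenever $\{i,j\}\notin\mathcal{S}$; $\mathbb{R}^{n\times n}_{\mathrm{exact}}(\mathcal{S})$ is the set of real $n\times n$ matrices $\Delta$ with ($\Delta_{ij}\ne0$ and $\Delta_{ji}\ne0$) if and only if $\{i,j\}\in\mathcal{S}$. *)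

theory Defs
  imports "HOL-Analysis.Analysis"
begin

text \<open>n x n real matrices are modelled as real^'n^'n with a finite index type 'n;
  entry (i,j) is X $ i $ j. An unordered pair {i,j} is the set {i,j} (so {i,i} = {i}).\<close>

definition is_pattern :: "'n set set \<Rightarrow> bool" where
  "is_pattern S \<longleftrightarrow> (\<forall>e\<in>S. \<exists>i j. e = {i, j}) \<and> (\<forall>i. {i, i} \<in> S)"

definition in_pattern :: "'n set set \<Rightarrow> real^'n^'n \<Rightarrow> bool" where
  "in_pattern S D \<longleftrightarrow> (\<forall>i j. {i, j} \<notin> S \<longrightarrow> D $ i $ j = 0 \<and> D $ j $ i = 0)"

definition in_exact_pattern :: "'n set set \<Rightarrow> real^'n^'n \<Rightarrow> bool" where
  "in_exact_pattern S D \<longleftrightarrow> (\<forall>i j. (D $ i $ j \<noteq> 0 \<and> D $ j $ i \<noteq> 0) \<longleftrightarrow> {i, j} \<in> S)"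

definition stochastic :: "real^'n^'n::finite \<Rightarrow> bool" where
  "stochastic P \<longleftrightarrow> (\<forall>i j. P $ i $ j \<ge> 0) \<and> (\<forall>i. (\<Sum>j\<in>UNIV. P $ i $ j) = 1)"

definition irreducible_mat :: "real^'n^'n \<Rightarrow> bool" where
  "irreducible_mat P \<longleftrightarrow> (\<forall>i j. (i, j) \<in> {(k, l). P $ k $ l > 0}\<^sup>*)"

definition stationary_distribution :: "real^'n^'n::finite \<Rightarrow> real^'n \<Rightarrow> bool" where
  "stationary_distribution P \<pi> \<longleftrightarrow>
     (\<forall>i. \<pi> $ i \<ge> 0) \<and> (\<Sum>i\<in>UNIV. \<pi> $ i) = 1 \<and> \<pi> v* P = \<pi>"

definition reversible_with :: "real^'n^'n::finite \<Rightarrow> real^'n \<Rightarrow> bool" where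
  "reversible_with P \<pi> \<longleftrightarrow> stochastic P \<and> irreducible_mat P \<and> stationary_distribution P \<pi>
     \<and> (\<forall>i. \<pi> $ i > 0) \<and> (\<forall>i j. \<pi> $ i * P $ i $ j = \<pi> $ j * P $ j $ i)"

definition sqrt_vec :: "real^'n \<Rightarrow> real^'n" where
  "sqrt_vec v = (\<chi> i. sqrt (v $ i))"

definition M_set :: "'n set set \<Rightarrow> 'n set set \<Rightarrow> real^'n^'n::finite \<Rightarrow> real^'n \<Rightarrow> (real^'n^'n) set" where
  "M_set \<P> \<S> P \<pi> = {X. in_exact_pattern (\<P> \<union> \<S>) X \<and> transpose X = X
      \<and> X *v sqrt_vec \<pi> = sqrt_vec \<pi>
      \<and> (\<forall>i j. {i, j} \<in> \<S> \<longrightarrow> X $ i $ j > 0)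
      \<and> (\<forall>i j. {i, j} \<notin> \<S> \<longrightarrow> X $ i $ j = (sqrt_vec \<pi> $ i / sqrt_vec \<pi> $ j) * P $ i $ j)}"

definition vderiv :: "(real \<Rightarrow> 'a::real_normed_vector) \<Rightarrow> real \<Rightarrow> 'a" where
  "vderiv f = (\<lambda>t. vector_derivative f (at t))"

definition smooth_on_interval :: "real \<Rightarrow> real \<Rightarrow> (real \<Rightarrow> 'a::real_normed_vector) \<Rightarrow> bool" where
  "smooth_on_interval a b \<gamma> \<longleftrightarrow> (\<forall>k. \<forall>t\<in>{a<..<b}. ((vderiv ^^ k) \<gamma>) differentiable (at t))"

definition tangent_space :: "('a::real_normed_vector) set \<Rightarrow> 'a \<Rightarrow> 'a set" where
  "tangent_space M X = {v. \<exists>\<epsilon>>0. \<exists>\<gamma>. smooth_on_interval (-\<epsilon>) \<epsilon> \<gamma>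
       \<and> (\<forall>t\<in>{-\<epsilon><..<\<epsilon>}. \<gamma> t \<in> M) \<and> \<gamma> 0 = X \<and> (\<gamma> has_vector_derivative v) (at 0)}"

end

theory Submission
  imports Defs
begin

lemma const_deriv_zero:
  fixes \<gamma> :: "real \<Rightarrow> 'a::real_normed_vector" and L :: "'a \<Rightarrow> 'b::real_normed_vector"
  assumes L: "bounded_linear L" and e: "\<epsilon> > 0"
    and c: "\<forall>t\<in>{-\<epsilon><..<\<epsilon>}. L (\<gamma> t) = c"
    and d: "(\<gamma> has_vector_derivative v) (at 0)"
  shows "L v = 0"
proof -
  have 1: "((\<lambda>t. L (\<gamma> t)) has_vector_derivative L v) (at 0)"
    using bounded_linear.has_vector_derivative[OF L d] .
  have "((\<lambda>t. c) has_vector_derivative 0) (at 0)" by (rule derivative_eq_intros) auto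
  hence 2: "((\<lambda>t. L (\<gamma> t)) has_vector_derivative 0) (at 0)"
    by (rule has_vector_derivative_transform_within_open[where S="{-\<epsilon><..<\<epsilon>}"])
       (use e c in auto)
  show ?thesis using vector_derivative_unique_at[OF 1 2] .
qed

lemma lin_bl: "linear f \<Longrightarrow> bounded_linear (f :: real^'n^'m \<Rightarrow> 'b::real_normed_vector)"
  by (simp add: linear_conv_bounded_linear)

lemma affine_vderiv:
  "vderiv (\<lambda>t. a + t *\<^sub>R b) = (\<lambda>t. b + t *\<^sub>R (0::'a::real_normed_vector))"
proof -
  have "\<And>t. ((\<lambda>t. a + t *\<^sub>R b) has_vector_derivative b) (at t)"
    by (auto intro!: derivative_eq_intros)
  thus ?thesis unfolding vderiv_def by (auto intro: vector_derivative_at)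
qed

lemma affine_smooth:
  "smooth_on_interval x y (\<lambda>t. a + t *\<^sub>R (b::'a::real_normed_vector))"
proof -
  have H: "\<forall>a b. \<exists>a' b'. (vderiv ^^ k) (\<lambda>t. a + t *\<^sub>R (b::'a)) = (\<lambda>t. a' + t *\<^sub>R b')" for k
  proof (induction k)
    case 0 then show ?case by auto
  next
    case (Suc k)
    show ?case
    proof (intro allI)
      fix a b :: 'a
      obtain a' b' where "(vderiv ^^ k) (\<lambda>t. a + t *\<^sub>R b) = (\<lambda>t. a' + t *\<^sub>R b')"
        using Suc by blast
      hence "(vderiv ^^ Suc k) (\<lambda>t. a + t *\<^sub>R b) = (\<lambda>t. b' + t *\<^sub>R 0)"
        by (simp add: affine_vderiv)
      thus "\<exists>a' b'. (vderiv ^^ Suc k) (\<lambda>t. a + t *\<^sub>R b) = (\<lambda>t. a' + t *\<^sub>R b')"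
        by blast
    qed
  qed
  show ?thesis unfolding smooth_on_interval_def
  proof (intro allI ballI)
    fix k t
    obtain a' b' where E: "(vderiv ^^ k) (\<lambda>t. a + t *\<^sub>R b) = (\<lambda>t. a' + t *\<^sub>R b')"
      using H[of k] by blast
    have "(\<lambda>t. a' + t *\<^sub>R b') differentiable (at t)"
      by (intro derivative_intros)
    then show "(vderiv ^^ k) (\<lambda>t. a + t *\<^sub>R b) differentiable (at t)" by (simp only: E)
  qed
qed

lemma transpose_eq_iff: "transpose (A::real^'n^'n) = A \<longleftrightarrow> (\<forall>i j. A $ i $ j = A $ j $ i)"
  by (auto simp: transpose_def vec_eq_iff)

lemma bl_entry: "bounded_linear (\<lambda>Y::real^'n^'m. Y $ i $ j)"
  by (rule lin_bl) (auto intro!: linearI)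

lemma bl_transp: "bounded_linear (\<lambda>Y::real^'n^'n. transpose Y - Y)"
  by (rule lin_bl) (auto intro!: linearI simp: transpose_def vec_eq_iff algebra_simps)

lemma bl_mv: "bounded_linear (\<lambda>Y::real^'n^'m. Y *v s)"
  by (rule lin_bl) (auto intro!: linearI simp: matrix_vector_mult_add_rdistrib scaleR_matrix_vector_assoc)

theorem lemma4p5:
  fixes \<P> \<S> :: "'n::finite set set" and P :: "real^'n^'n" and \<pi> :: "real^'n"
  assumes "is_pattern \<P>" and "is_pattern \<S>"
    and "in_pattern \<P> P"
    and "reversible_with P \<pi>"
    and "X \<in> M_set \<P> \<S> P \<pi>"
  shows "tangent_space (M_set \<P> \<S> P \<pi>) X =
           {\<xi>. in_pattern \<S> \<xi> \<and> transpose \<xi> = \<xi> \<and> \<xi> *v sqrt_vec \<pi> = 0}"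
proof
  let ?s = "sqrt_vec \<pi>"
  show "tangent_space (M_set \<P> \<S> P \<pi>) X \<subseteq> {\<xi>. in_pattern \<S> \<xi> \<and> transpose \<xi> = \<xi> \<and> \<xi> *v ?s = 0}"
  proof
    fix v assume "v \<in> tangent_space (M_set \<P> \<S> P \<pi>) X"
    then obtain \<epsilon> \<gamma> where e: "\<epsilon> > 0" and inM: "\<forall>t\<in>{-\<epsilon><..<\<epsilon>}. \<gamma> t \<in> M_set \<P> \<S> P \<pi>"
      and d: "(\<gamma> has_vector_derivative v) (at 0)"
      unfolding tangent_space_def by blast
    have "in_pattern \<S> v"
      unfolding in_pattern_def
    proof (intro allI impI conjI)
      fix i j assume nS: "{i, j} \<notin> \<S>"
      hence nS': "{j, i} \<notin> \<S>" by (simp add: insert_commute)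
      show "v $ i $ j = 0"
        by (rule const_deriv_zero[OF bl_entry e _ d, where c = "(?s $ i / ?s $ j) * P $ i $ j"])
           (use inM nS in \<open>auto simp: M_set_def\<close>)
      show "v $ j $ i = 0"
        by (rule const_deriv_zero[OF bl_entry e _ d, where c = "(?s $ j / ?s $ i) * P $ j $ i"])
           (use inM nS' in \<open>auto simp: M_set_def\<close>)
    qed
    moreover have "transpose v - v = 0"
      by (rule const_deriv_zero[OF bl_transp e _ d, where c = 0])
         (use inM in \<open>auto simp: M_set_def\<close>)
    moreover have "v *v ?s = 0"
      by (rule const_deriv_zero[OF bl_mv e _ d, where c = ?s])
         (use inM in \<open>auto simp: M_set_def\<close>)
    ultimately show "v \<in> {\<xi>. in_pattern \<S> \<xi> \<and> transpose \<xi> = \<xi> \<and> \<xi> *v ?s = 0}" by simp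
  qed
  show "{\<xi>. in_pattern \<S> \<xi> \<and> transpose \<xi> = \<xi> \<and> \<xi> *v ?s = 0} \<subseteq> tangent_space (M_set \<P> \<S> P \<pi>) X"
  proof
    fix \<xi> assume "\<xi> \<in> {\<xi>. in_pattern \<S> \<xi> \<and> transpose \<xi> = \<xi> \<and> \<xi> *v ?s = 0}"
    hence xp: "in_pattern \<S> \<xi>" and xt: "\<forall>i j. \<xi> $ i $ j = \<xi> $ j $ i" and xs: "\<xi> *v ?s = 0"
      by (auto simp: transpose_eq_iff)
    have Xe: "in_exact_pattern (\<P> \<union> \<S>) X" and Xt: "\<forall>i j. X $ i $ j = X $ j $ i"
      and Xs: "X *v ?s = ?s" and Xpos: "\<forall>i j. {i, j} \<in> \<S> \<longrightarrow> X $ i $ j > 0"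
      and Xn: "\<forall>i j. {i, j} \<notin> \<S> \<longrightarrow> X $ i $ j = (?s $ i / ?s $ j) * P $ i $ j"
      using assms(5) by (auto simp: M_set_def transpose_eq_iff)
    have ev: "eventually (\<lambda>t. \<forall>i j. {i, j} \<in> \<S> \<longrightarrow> (X + t *\<^sub>R \<xi>) $ i $ j > 0) (nhds (0::real))"
    proof (intro eventually_all_finite)
      fix i j
      show "eventually (\<lambda>t. {i, j} \<in> \<S> \<longrightarrow> (X + t *\<^sub>R \<xi>) $ i $ j > 0) (nhds (0::real))"
      proof (cases "{i, j} \<in> \<S>")
        case True
        have "((\<lambda>t. X $ i $ j + t * \<xi> $ i $ j) \<longlongrightarrow> X $ i $ j + 0 * \<xi> $ i $ j) (nhds (0::real))"
          by (intro tendsto_intros filterlim_ident)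
        hence "((\<lambda>t. X $ i $ j + t * \<xi> $ i $ j) \<longlongrightarrow> X $ i $ j) (nhds (0::real))" by simp
        from order_tendstoD(1)[OF this, of 0] True Xpos
        show ?thesis by (auto elim!: eventually_mono)
      qed simp
    qed
    then obtain d where d: "d > 0" and dQ: "\<forall>t. dist t 0 < d \<longrightarrow>
        (\<forall>i j. {i, j} \<in> \<S> \<longrightarrow> (X + t *\<^sub>R \<xi>) $ i $ j > 0)"
      unfolding eventually_nhds_metric by blast
    have inM: "X + t *\<^sub>R \<xi> \<in> M_set \<P> \<S> P \<pi>" if t: "t \<in> {-d<..<d}" for t
    proof -
      have pos: "\<forall>i j. {i, j} \<in> \<S> \<longrightarrow> (X + t *\<^sub>R \<xi>) $ i $ j > 0"
        using dQ t by (auto simp: dist_real_def)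
      have same: "(X + t *\<^sub>R \<xi>) $ i $ j = X $ i $ j" if "{i, j} \<notin> \<S>" for i j
        using xp that by (auto simp: in_pattern_def)
      have "in_exact_pattern (\<P> \<union> \<S>) (X + t *\<^sub>R \<xi>)"
        unfolding in_exact_pattern_def
      proof (intro allI)
        fix i j
        show "((X + t *\<^sub>R \<xi>) $ i $ j \<noteq> 0 \<and> (X + t *\<^sub>R \<xi>) $ j $ i \<noteq> 0) = ({i, j} \<in> \<P> \<union> \<S>)"
        proof (cases "{i, j} \<in> \<S>")
          case True
          hence "{j, i} \<in> \<S>" by (simp add: insert_commute)
          with True pos show ?thesis by force
        next
          case False
          hence "{j, i} \<notin> \<S>" by (simp add: insert_commute)
          with False same have "(X + t *\<^sub>R \<xi>) $ i $ j = X $ i $ j" "(X + t *\<^sub>R \<xi>) $ j $ i = X $ j $ i"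
            by blast+
          with Xe show ?thesis unfolding in_exact_pattern_def by presburger
        qed
      qed
      moreover have "transpose (X + t *\<^sub>R \<xi>) = X + t *\<^sub>R \<xi>"
        using Xt xt by (simp add: transpose_eq_iff)
      moreover have "(X + t *\<^sub>R \<xi>) *v ?s = ?s"
        using Xs xs by (simp add: matrix_vector_mult_add_rdistrib flip: scaleR_matrix_vector_assoc)
      moreover have "\<forall>i j. {i, j} \<notin> \<S> \<longrightarrow> (X + t *\<^sub>R \<xi>) $ i $ j = (?s $ i / ?s $ j) * P $ i $ j"
        using same Xn by simp
      ultimately show ?thesis using pos unfolding M_set_def by blast
    qed
    have "((\<lambda>t. X + t *\<^sub>R \<xi>) has_vector_derivative \<xi>) (at 0)"
      by (auto intro!: derivative_eq_intros)
    then show "\<xi> \<in> tangent_space (M_set \<P> \<S> P \<pi>) X"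
      unfolding tangent_space_def
    proof (intro CollectI exI[of _ d] conjI exI[of _ "\<lambda>t. X + t *\<^sub>R \<xi>"])
      show "smooth_on_interval (- d) d (\<lambda>t. X + t *\<^sub>R \<xi>)" by (rule affine_smooth)
      show "\<forall>t\<in>{- d<..<d}. X + t *\<^sub>R \<xi> \<in> M_set \<P> \<S> P \<pi>" using inM by blast
    qed (use d in auto)
  qed
qed

end
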